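(* Let $p_j>0$, $q_{j+1}>0$, $r_j\ge 0$ ($j\ge 0$) be the one-step transition probabilities of a random walk on $\mathcal{N}=\{0,1,2,\dots\}$ (up-step $p_j$, holding $r_j$, down-step $q_j$ from state $j$), with $q_0:=0$ and $p_j+q_j+r_j=1$ for all $j\ge0$. Let $\pi_0:=1$, $\pi_n:=\frac{p_0\cdots p_{n-1}}{q_1\cdots q_n}$ ($n\ge1$), and define polynomials $Q_n$ by $Q_0(x)=1$, $p_0Q_1(x)=x-r_0$, and $xQ_n(x)=q_nQ_{n-1}(x)+r_nQ_n(x)+p_nQ_{n+1}(x)$ for $n\ge 1$. Let $\psi$ be the unique Borel probability measure on $[-1,1]$ with infinite support with respect to which the $Q_n$ are orthogonal, and $\eta:=\sup\operatorname{supp}(\psi)$. For $\theta\ge\eta$ and $j\ge 0$ define \[p_j(\theta):=\frac{Q_{j+1}(\theta)}{Q_j(\theta)}\frac{p_j}{\theta},\quad r_j(\theta):=\frac{r_j}{\theta},\quad \pi_j(\theta):=\pi_jQ_j^2(\theta),\] and for $n\ge0$ \[M_n(\theta):=\sum_{j=0}^n\frac{1}{p_j(\theta)\pi_j(\theta)}\sum_{k=0}^j r_k(\theta)\pi_k(\theta).\] If $\eta\le\theta_1\le\theta_2$, then $M_n(\theta_1)\ge M_n(\theta_2)$ for all $n\ge 0$.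
   Context: It is known that $\eta>0$ and that $Q_n(x)>0$ for all $n\ge0$ whenever $x\ge\eta$, so the quantities above are well defined and positive. *)

theory Defs
  imports "HOL-Probability.Probability"
begin

fun Qpol :: "(nat \<Rightarrow> real) \<Rightarrow> (nat \<Rightarrow> real) \<Rightarrow> (nat \<Rightarrow> real) \<Rightarrow> nat \<Rightarrow> real \<Rightarrow> real" where
  "Qpol p q r 0 x = 1"
| "Qpol p q r (Suc 0) x = (x - r 0) / p 0"
| "Qpol p q r (Suc (Suc n)) x =
     ((x - r (Suc n)) * Qpol p q r (Suc n) x - q (Suc n) * Qpol p q r n x) / p (Suc n)"

definition pis :: "(nat \<Rightarrow> real) \<Rightarrow> (nat \<Rightarrow> real) \<Rightarrow> nat \<Rightarrow> real" where
  "pis p q n = (\<Prod>i<n. p i) / (\<Prod>i<n. q (Suc i))"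

definition msupport :: "real measure \<Rightarrow> real set" where
  "msupport M = {x. \<forall>e>0. emeasure M (ball x e) > 0}"

definition ptheta :: "(nat \<Rightarrow> real) \<Rightarrow> (nat \<Rightarrow> real) \<Rightarrow> (nat \<Rightarrow> real) \<Rightarrow> nat \<Rightarrow> real \<Rightarrow> real" where
  "ptheta p q r j \<theta> = Qpol p q r (Suc j) \<theta> / Qpol p q r j \<theta> * (p j / \<theta>)"

definition rtheta :: "(nat \<Rightarrow> real) \<Rightarrow> nat \<Rightarrow> real \<Rightarrow> real" where
  "rtheta r j \<theta> = r j / \<theta>"

definition pitheta :: "(nat \<Rightarrow> real) \<Rightarrow> (nat \<Rightarrow> real) \<Rightarrow> (nat \<Rightarrow> real) \<Rightarrow> nat \<Rightarrow> real \<Rightarrow> real" where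
  "pitheta p q r j \<theta> = pis p q j * (Qpol p q r j \<theta>)\<^sup>2"

definition Mfun :: "(nat \<Rightarrow> real) \<Rightarrow> (nat \<Rightarrow> real) \<Rightarrow> (nat \<Rightarrow> real) \<Rightarrow> nat \<Rightarrow> real \<Rightarrow> real" where
  "Mfun p q r n \<theta> = (\<Sum>j\<le>n. 1 / (ptheta p q r j \<theta> * pitheta p q r j \<theta>) *
       (\<Sum>k\<le>j. rtheta r k \<theta> * pitheta p q r k \<theta>))"

end

theory Submission
  imports Defs
begin

lemma ratio_mono:
  fixes p q r :: "nat \<Rightarrow> real"
  assumes p_pos: "\<And>j. p j > 0" and q_pos: "\<And>j. q (Suc j) > 0"
    and Q_pos: "\<And>n x. x \<ge> \<eta> \<Longrightarrow> Qpol p q r n x > 0"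
    and xy: "\<eta> \<le> x" "x \<le> y"
  shows "Qpol p q r (Suc n) x / Qpol p q r n x \<le> Qpol p q r (Suc n) y / Qpol p q r n y"
proof (induction n)
  case 0
  then show ?case using xy p_pos[of 0] by (simp add: divide_right_mono)
next
  case (Suc n)
  have y: "\<eta> \<le> y" using xy by linarith
  define a where "a = Qpol p q r n x" define b where "b = Qpol p q r (Suc n) x"
  define c where "c = Qpol p q r n y" define d where "d = Qpol p q r (Suc n) y"
  have pos: "a > 0" "b > 0" "c > 0" "d > 0" using Q_pos xy y unfolding a_def b_def c_def d_def by auto
  have IH: "b / a \<le> d / c" using Suc unfolding a_def b_def c_def d_def .
  have inv: "c / d \<le> a / b" using IH pos by (simp add: divide_simps mult.commute)
  have e1: "Qpol p q r (Suc (Suc n)) x / b = ((x - r (Suc n)) - q (Suc n) * (a / b)) / p (Suc n)"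
    using pos p_pos[of "Suc n"] unfolding a_def b_def by (simp add: field_simps)
  have e2: "Qpol p q r (Suc (Suc n)) y / d = ((y - r (Suc n)) - q (Suc n) * (c / d)) / p (Suc n)"
    using pos p_pos[of "Suc n"] unfolding c_def d_def by (simp add: field_simps)
  have "q (Suc n) * (c / d) \<le> q (Suc n) * (a / b)"
    using inv q_pos[of n] by (intro mult_left_mono) auto
  then have "((x - r (Suc n)) - q (Suc n) * (a / b)) \<le> ((y - r (Suc n)) - q (Suc n) * (c / d))"
    using xy by linarith
  then show ?case unfolding b_def[symmetric] d_def[symmetric] e1 e2
    using p_pos[of "Suc n"] by (simp add: divide_right_mono)
qed

lemma quot_anti:
  fixes p q r :: "nat \<Rightarrow> real"
  assumes p_pos: "\<And>j. p j > 0" and q_pos: "\<And>j. q (Suc j) > 0"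
    and Q_pos: "\<And>n x. x \<ge> \<eta> \<Longrightarrow> Qpol p q r n x > 0"
    and xy: "\<eta> \<le> x" "x \<le> y" and km: "k \<le> m"
  shows "Qpol p q r k y / Qpol p q r m y \<le> Qpol p q r k x / Qpol p q r m x"
  using km
proof (induction m rule: dec_induct)
  case base
  have "Qpol p q r k y > 0" "Qpol p q r k x > 0" using Q_pos xy by auto
  then show ?case by simp
next
  case (step m)
  have y: "\<eta> \<le> y" using xy by linarith
  have R: "Qpol p q r (Suc m) x / Qpol p q r m x \<le> Qpol p q r (Suc m) y / Qpol p q r m y"
    by (rule ratio_mono[OF p_pos q_pos Q_pos xy])
  have px: "Qpol p q r k x > 0" "Qpol p q r m x > 0" "Qpol p q r (Suc m) x > 0"
    and py: "Qpol p q r k y > 0" "Qpol p q r m y > 0" "Qpol p q r (Suc m) y > 0"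
    using Q_pos xy y by auto
  have ex: "Qpol p q r k x / Qpol p q r (Suc m) x
      = (Qpol p q r k x / Qpol p q r m x) / (Qpol p q r (Suc m) x / Qpol p q r m x)"
    using px by (simp add: field_simps)
  have ey: "Qpol p q r k y / Qpol p q r (Suc m) y
      = (Qpol p q r k y / Qpol p q r m y) / (Qpol p q r (Suc m) y / Qpol p q r m y)"
    using py by (simp add: field_simps)
  show ?case unfolding ex ey
    by (rule frac_le) (use step.IH R px py in auto)
qed

theorem lemma3:
  fixes p q r :: "nat \<Rightarrow> real" and psi :: "real measure" and \<eta> \<theta>1 \<theta>2 :: real
  assumes p_pos: "\<And>j. p j > 0"
    and q_pos: "\<And>j. q (Suc j) > 0"
    and r_nonneg: "\<And>j. r j \<ge> 0"
    and q0: "q 0 = 0"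
    and sum1: "\<And>j. p j + q j + r j = 1"
    and psi_prob: "prob_space psi"
    and psi_borel: "sets psi = sets borel"
    and psi_on: "measure psi {-1..1} = 1"
    and psi_supp: "msupport psi \<subseteq> {-1..1}"
    and psi_inf: "infinite (msupport psi)"
    and psi_orth: "\<And>m n. m \<noteq> n \<Longrightarrow>
                      integral\<^sup>L psi (\<lambda>x. Qpol p q r m x * Qpol p q r n x) = 0"
    and eta_def: "\<eta> = Sup (msupport psi)"
    and eta_pos: "\<eta> > 0"
    and Q_pos: "\<And>n x. x \<ge> \<eta> \<Longrightarrow> Qpol p q r n x > 0"
    and th1: "\<eta> \<le> \<theta>1" and th12: "\<theta>1 \<le> \<theta>2"
  shows "\<forall>n. Mfun p q r n \<theta>1 \<ge> Mfun p q r n \<theta>2"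
proof
  fix n
  have pis_pos: "pis p q j > 0" for j
    unfolding pis_def using p_pos q_pos by (auto intro!: divide_pos_pos prod_pos)
  define c where "c j k = r k * pis p q k / (p j * pis p q j)" for j k
  have c_nn: "c j k \<ge> 0" for j k
    unfolding c_def using r_nonneg[of k] pis_pos[of k] pis_pos[of j] p_pos[of j] by simp
  define g where "g j k \<theta> = c j k * (Qpol p q r k \<theta> / Qpol p q r j \<theta>)\<^sup>2
        * (Qpol p q r j \<theta> / Qpol p q r (Suc j) \<theta>)" for j k \<theta>
  have eq: "Mfun p q r n \<theta> = (\<Sum>j\<le>n. \<Sum>k\<le>j. g j k \<theta>)" if th: "\<eta> \<le> \<theta>" for \<theta>
    unfolding Mfun_def
  proof (rule sum.cong[OF refl], unfold sum_distrib_left, rule sum.cong[OF refl])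
    fix j k
    have "\<theta> > 0" using th eta_pos by linarith
    moreover have "Qpol p q r j \<theta> > 0" "Qpol p q r (Suc j) \<theta> > 0" "Qpol p q r k \<theta> > 0"
      using Q_pos th by auto
    moreover note pis_pos[of j] p_pos[of j]
    ultimately show "1 / (ptheta p q r j \<theta> * pitheta p q r j \<theta>) * (rtheta r k \<theta> * pitheta p q r k \<theta>) = g j k \<theta>"
      unfolding g_def c_def ptheta_def pitheta_def rtheta_def
      by (simp add: field_simps power2_eq_square)
  qed
  have th2: "\<eta> \<le> \<theta>2" using th1 th12 by linarith
  have "(\<Sum>j\<le>n. \<Sum>k\<le>j. g j k \<theta>2) \<le> (\<Sum>j\<le>n. \<Sum>k\<le>j. g j k \<theta>1)"
  proof (intro sum_mono)
    fix j :: nat and k :: nat assume "k \<in> {..j}"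
    then have kj: "k \<le> j" by simp
    have A: "Qpol p q r k \<theta>2 / Qpol p q r j \<theta>2 \<le> Qpol p q r k \<theta>1 / Qpol p q r j \<theta>1"
      by (rule quot_anti[OF p_pos q_pos Q_pos th1 th12 kj])
    have B: "Qpol p q r j \<theta>2 / Qpol p q r (Suc j) \<theta>2 \<le> Qpol p q r j \<theta>1 / Qpol p q r (Suc j) \<theta>1"
      by (rule quot_anti[OF p_pos q_pos Q_pos th1 th12 le_SucI[OF order_refl]])
    have pos: "Qpol p q r k \<theta>2 / Qpol p q r j \<theta>2 > 0" "Qpol p q r j \<theta>2 / Qpol p q r (Suc j) \<theta>2 > 0"
      using Q_pos th2 by auto
    have A2: "(Qpol p q r k \<theta>2 / Qpol p q r j \<theta>2)\<^sup>2 \<le> (Qpol p q r k \<theta>1 / Qpol p q r j \<theta>1)\<^sup>2"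
      using A pos by (intro power_mono) auto
    show "g j k \<theta>2 \<le> g j k \<theta>1" unfolding g_def
      by (intro mult_mono mult_left_mono A2 B c_nn) (use pos c_nn in auto)
  qed
  then show "Mfun p q r n \<theta>1 \<ge> Mfun p q r n \<theta>2" using eq[OF th1] eq[OF th2] by simp
qed

end
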